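(* Let $n\ge1$, $q$ a prime power, and let $\mathcal{F}_1\neq\mathcal{F}_2$ be two coverings of $[n]$, neither of which contains a redundant basic set. Then the combinatorial metrics $d_{\mathcal{F}_1}$ and $d_{\mathcal{F}_2}$ on $\mathbb{F}_q^n$ are different.
   Context: A family $\mathcal{A}$ of subsets of $[n]$ is a covering of $X\subset[n]$ if $X\subset\bigcup_{A\in\mathcal{A}}A$. For a covering $\mathcal{F}$ of $[n]$ (elements called basic sets) and $x\in\mathbb{F}_q^n$ with $\mathrm{supp}(x)=\{i:x_i\neq0\}$, $\mathrm{wt}_{\mathcal{F}}(x)=\min\{|\mathcal{A}|:\mathcal{A}\subset\mathcal{F},\ \mathcal{A}\text{ covers }\mathrm{supp}(x)\}$ and $d_{\mathcal{F}}(x,y)=\mathrm{wt}_{\mathcal{F}}(x-y)$. A basic set $A\in\mathcal{F}$ is redundant if there is $B\in\mathcal{F}$ with $A\subsetneq B$. *)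

theory Defs
  imports Main
begin

text \<open>Vectors of F_q^n are modelled as functions nat => 'a vanishing outside [n] = {1..n}.\<close>

definition vecs :: "nat \<Rightarrow> (nat \<Rightarrow> 'a::zero) set" where
  "vecs n = {x. \<forall>i. i \<notin> {1..n} \<longrightarrow> x i = 0}"

definition supp :: "(nat \<Rightarrow> 'a::zero) \<Rightarrow> nat set" where
  "supp x = {i. x i \<noteq> 0}"

definition covers :: "nat set set \<Rightarrow> nat set \<Rightarrow> bool" where
  "covers \<A> X \<longleftrightarrow> X \<subseteq> \<Union>\<A>"

definition is_covering :: "nat \<Rightarrow> nat set set \<Rightarrow> bool" where
  "is_covering n \<F> \<longleftrightarrow> (\<forall>A\<in>\<F>. A \<subseteq> {1..n}) \<and> covers \<F> {1..n}"

definition redundant :: "nat set set \<Rightarrow> nat set \<Rightarrow> bool" where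
  "redundant \<F> A \<longleftrightarrow> A \<in> \<F> \<and> (\<exists>B\<in>\<F>. A \<subset> B)"

definition wtF :: "nat set set \<Rightarrow> (nat \<Rightarrow> 'a::zero) \<Rightarrow> nat" where
  "wtF \<F> x = (LEAST k. \<exists>\<A>. \<A> \<subseteq> \<F> \<and> covers \<A> (supp x) \<and> card \<A> = k)"

definition dF :: "nat set set \<Rightarrow> (nat \<Rightarrow> 'a::ab_group_add) \<Rightarrow> (nat \<Rightarrow> 'a) \<Rightarrow> nat" where
  "dF \<F> x y = wtF \<F> (\<lambda>i. x i - y i)"

end

theory Submission
  imports Defs
begin

lemma wt_one:
  assumes "finite F" "supp x \<noteq> {}" "A \<in> F" "supp x \<subseteq> A"
  shows "wtF F x = 1"
proof -
  have ex: "\<exists>\<A>. \<A> \<subseteq> F \<and> covers \<A> (supp x) \<and> card \<A> = 1"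
    by (rule exI[of _ "{A}"]) (use assms in \<open>auto simp: covers_def\<close>)
  have le: "wtF F x \<le> 1" unfolding wtF_def using ex by (rule Least_le)
  have "wtF F x \<noteq> 0"
  proof
    assume "wtF F x = 0"
    moreover have "\<exists>\<A>. \<A> \<subseteq> F \<and> covers \<A> (supp x) \<and> card \<A> = wtF F x"
      unfolding wtF_def using ex by (rule LeastI[where P="\<lambda>k. \<exists>\<A>. \<A> \<subseteq> F \<and> covers \<A> (supp x) \<and> card \<A> = k"])
    ultimately obtain \<A> where "\<A> \<subseteq> F" "covers \<A> (supp x)" "card \<A> = 0" by auto
    then have "\<A> = {}" using assms(1) finite_subset card_0_eq by metis
    then show False using \<open>covers \<A> (supp x)\<close> assms(2) by (auto simp: covers_def)
  qed
  with le show ?thesis by auto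
qed

lemma wt_one_D:
  assumes "\<exists>k \<A>. \<A> \<subseteq> F \<and> covers \<A> (supp x) \<and> card \<A> = k" "wtF F x = 1"
  shows "\<exists>A\<in>F. supp x \<subseteq> A"
proof -
  have "\<exists>\<A>. \<A> \<subseteq> F \<and> covers \<A> (supp x) \<and> card \<A> = wtF F x"
    unfolding wtF_def using assms(1)
    by (rule LeastI_ex[where P="\<lambda>k. \<exists>\<A>. \<A> \<subseteq> F \<and> covers \<A> (supp x) \<and> card \<A> = k"])
  then obtain \<A> where "\<A> \<subseteq> F" "covers \<A> (supp x)" "card \<A> = 1" using assms(2) by auto
  then obtain A where "\<A> = {A}" by (auto simp: card_Suc_eq)
  then show ?thesis using \<open>\<A> \<subseteq> F\<close> \<open>covers \<A> (supp x)\<close> by (auto simp: covers_def)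
qed

lemma fin_cov: "is_covering n F \<Longrightarrow> finite F"
  unfolding is_covering_def
  by (meson Pow_iff finite_Pow_iff finite_atLeastAtMost finite_subset subsetI)

lemma nonempty_mem:
  assumes "n \<ge> 1" "is_covering n F" "\<forall>A. \<not> redundant F A" "A \<in> F"
  shows "A \<noteq> {}"
proof
  assume e: "A = {}"
  have "(1::nat) \<in> \<Union>F" using assms(1,2) by (auto simp: is_covering_def covers_def)
  then obtain C where "C \<in> F" "1 \<in> C" by auto
  then have "A \<subset> C" using e by auto
  then show False using assms(3,4) \<open>C \<in> F\<close> by (auto simp: redundant_def)
qed

definition ind :: "nat set \<Rightarrow> nat \<Rightarrow> 'a::field" where
  "ind A = (\<lambda>i. if i \<in> A then 1 else 0)"

lemma supp_ind: "supp (ind A :: nat \<Rightarrow> 'a::field) = A"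
  by (auto simp: supp_def ind_def)

lemma dF_ind: "dF F (ind A) (\<lambda>i. 0 :: 'a::field) = wtF F (ind A :: nat \<Rightarrow> 'a)"
  by (simp add: dF_def)

lemma ind_vecs: "A \<subseteq> {1..n} \<Longrightarrow> (ind A :: nat \<Rightarrow> 'a::field) \<in> vecs n"
  by (auto simp: vecs_def ind_def)

lemma one_side:
  fixes F1 F2 :: "nat set set"
  assumes "n \<ge> 1"
    and c1: "is_covering n F1" and c2: "is_covering n F2" and A: "A \<in> F1" "A \<notin> F2"
    and r1: "\<forall>A. \<not> redundant F1 A" and r2: "\<forall>A. \<not> redundant F2 A"
  shows "\<exists>x \<in> vecs n. \<exists>y \<in> vecs n.
           dF F1 x y \<noteq> dF F2 (x :: nat \<Rightarrow> 'a :: {finite, field}) y"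
proof -
  have f1: "finite F1" and f2: "finite F2" using c1 c2 fin_cov by auto
  have z: "(\<lambda>i. 0::'a) \<in> vecs n" by (simp add: vecs_def)
  have Asub: "A \<subseteq> {1..n}" using c1 A by (auto simp: is_covering_def)
  have Ane: "A \<noteq> {}" using nonempty_mem[OF assms(1) c1 r1 A(1)] .
  have w1: "wtF F1 (ind A :: nat \<Rightarrow> 'a) = 1"
    by (rule wt_one[OF f1 _ A(1)]) (auto simp: supp_ind Ane)
  show ?thesis
  proof (cases "wtF F2 (ind A :: nat \<Rightarrow> 'a) = 1")
    case False
    then show ?thesis using w1 z ind_vecs[OF Asub] dF_ind by metis
  next
    case True
    have "\<exists>k \<A>. \<A> \<subseteq> F2 \<and> covers \<A> (supp (ind A :: nat \<Rightarrow> 'a)) \<and> card \<A> = k"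
      using c2 Asub by (intro exI[of _ "card F2"] exI[of _ F2]) (auto simp: supp_ind is_covering_def covers_def)
    from wt_one_D[OF this True] obtain B where B: "B \<in> F2" "A \<subseteq> B"
      by (auto simp: supp_ind)
    have AB: "A \<subset> B" using B A by auto
    have Bsub: "B \<subseteq> {1..n}" using c2 B by (auto simp: is_covering_def)
    have w2: "wtF F2 (ind B :: nat \<Rightarrow> 'a) = 1"
      by (rule wt_one[OF f2 _ B(1)]) (use Ane AB in \<open>auto simp: supp_ind\<close>)
    have "wtF F1 (ind B :: nat \<Rightarrow> 'a) \<noteq> 1"
    proof
      assume h: "wtF F1 (ind B :: nat \<Rightarrow> 'a) = 1"
      have "\<exists>k \<A>. \<A> \<subseteq> F1 \<and> covers \<A> (supp (ind B :: nat \<Rightarrow> 'a)) \<and> card \<A> = k"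
        using c1 Bsub by (intro exI[of _ "card F1"] exI[of _ F1]) (auto simp: supp_ind is_covering_def covers_def)
      from wt_one_D[OF this h] obtain C where "C \<in> F1" "B \<subseteq> C"
        by (auto simp: supp_ind)
      then have "A \<subset> C" using AB by auto
      then show False using r1 A(1) \<open>C \<in> F1\<close> by (auto simp: redundant_def)
    qed
    then show ?thesis using w2 z ind_vecs[OF Bsub] dF_ind by metis
  qed
qed

theorem proposition2:
  fixes n :: nat and F1 F2 :: "nat set set"
  assumes "n \<ge> 1"
    and "is_covering n F1" and "is_covering n F2" and "F1 \<noteq> F2"
    and "\<forall>A. \<not> redundant F1 A" and "\<forall>A. \<not> redundant F2 A"
  shows "\<exists>x \<in> vecs n. \<exists>y \<in> vecs n.
           dF F1 x y \<noteq> dF F2 (x :: nat \<Rightarrow> 'a :: {finite, field}) y"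
proof -
  obtain A where "(A \<in> F1 \<and> A \<notin> F2) \<or> (A \<in> F2 \<and> A \<notin> F1)" using assms(4) by blast
  then show ?thesis
  proof
    assume "A \<in> F1 \<and> A \<notin> F2"
    then show ?thesis using one_side[OF assms(1,2,3) _ _ assms(5,6)] by blast
  next
    assume "A \<in> F2 \<and> A \<notin> F1"
    then have "\<exists>x \<in> vecs n. \<exists>y \<in> vecs n.
           dF F2 x y \<noteq> dF F1 (x :: nat \<Rightarrow> 'a) y"
      using one_side[OF assms(1,3,2) _ _ assms(6,5)] by blast
    then show ?thesis by metis
  qed
qed

end
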